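(* Let $N=\{1,\dots,n\}$ and $u:X\to\mathbb{R}$ non-constant affine. Suppose that for each $i\in N$, $\succ_i$ is a Bewley preference on $\mathcal{F}$ with unique representation $(u,C_i)$, and that $\succ_0$ is either a hope-and-prepare preference with unique representation $(u,C_0,C_0)$ or a Bewley preference with unique representation $(u,C_0)$. Then: (i) Pareto (for all $f,g\in\mathcal{F}$, if $f\succ_i g$ for all $i\in N$ then $f\succ_0 g$) holds if and only if $C_0\subseteq\mathrm{co}\left(\bigcup_{i=1}^nC_i\right)$; (ii) Caution for incomparability (for all $f\in\mathcal{F}$, $x\in X$, if there is $i\in N$ with $f\Join_i x$ then $f\Join_0 x$) holds if and only if $\mathrm{co}\left(\bigcup_{i=1}^nC_i\right)\subseteq C_0$. In particular, when both conditions hold, $C_0=\mathrm{co}\left(\bigcup_{i=1}^nC_i\right)$.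
   Context: $S$ is a set of states with algebra $\Sigma$; $X$ is a non-singleton convex subset of a real vector space; $\mathcal{F}$ is the set of simple acts $f:S\to X$; elements of $X$ are identified with constant acts; $\Delta$ is the set of finitely additive probability measures on $(S,\Sigma)$ with weak* topology; $\mathrm{co}(P)$ denotes the convex hull of $P\subseteq\Delta$. A Bewley preference with representation $(u,C)$ ($C\subseteq\Delta$ non-empty convex compact): $f\succ g$ iff $\int u(f)dp>\int u(g)dp$ for all $p\in C$. A hope-and-prepare preference with representation $(u,C,D)$ ($C,D$ convex compact, $C\cap D\ne\emptyset$): $f\succ g$ iff $\min_{p\in C}\int u(f)dp>\min_{p\in C}\int u(g)dp$ and $\max_{p\in D}\int u(f)dp>\max_{p\in D}\int u(g)dp$. Unique representation: sets unique, $u$ unique up to positive affine transformation. $f\Join_i x$ means $f\not\succ_i x$ and $x\not\succ_i f$. *)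

theory Defs
  imports "HOL-Analysis.Analysis"
begin

text \<open>A charge is a function on all subsets, normalised to 0 outside \<Sigma>; the weak* topology
  is rendered as the product topology of (\<open>'a set \<Rightarrow> real\<close>) (pointwise convergence on events),
  which agrees with the weak* topology on the norm-bounded set \<Delta>.\<close>

definition fa_probs :: "'a set set \<Rightarrow> ('a set \<Rightarrow> real) set" where
  "fa_probs \<Sigma> = {p. (\<forall>A\<in>\<Sigma>. 0 \<le> p A) \<and> p UNIV = 1
      \<and> (\<forall>A\<in>\<Sigma>. \<forall>B\<in>\<Sigma>. A \<inter> B = {} \<longrightarrow> p (A \<union> B) = p A + p B)
      \<and> (\<forall>A. A \<notin> \<Sigma> \<longrightarrow> p A = 0)}"

definition fconvex :: "('a set \<Rightarrow> real) set \<Rightarrow> bool" where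
  "fconvex P \<longleftrightarrow> (\<forall>p\<in>P. \<forall>q\<in>P. \<forall>t::real. 0 \<le> t \<and> t \<le> 1 \<longrightarrow> (\<lambda>A. t * p A + (1 - t) * q A) \<in> P)"

definition fconvex_hull :: "('a set \<Rightarrow> real) set \<Rightarrow> ('a set \<Rightarrow> real) set" where
  "fconvex_hull P = \<Inter>{K. P \<subseteq> K \<and> fconvex K}"

definition affine_on :: "'b::real_vector set \<Rightarrow> ('b \<Rightarrow> real) \<Rightarrow> bool" where
  "affine_on X u \<longleftrightarrow> (\<forall>x\<in>X. \<forall>y\<in>X. \<forall>t::real. 0 \<le> t \<and> t \<le> 1 \<longrightarrow>
      u (t *\<^sub>R x + (1 - t) *\<^sub>R y) = t * u x + (1 - t) * u y)"

definition simple_acts :: "'a set set \<Rightarrow> 'b set \<Rightarrow> ('a \<Rightarrow> 'b) set" where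
  "simple_acts \<Sigma> X = {f. finite (range f) \<and> range f \<subseteq> X \<and> (\<forall>y. f -` {y} \<in> \<Sigma>)}"

definition eu :: "('a set \<Rightarrow> real) \<Rightarrow> ('b \<Rightarrow> real) \<Rightarrow> ('a \<Rightarrow> 'b) \<Rightarrow> real" where
  "eu p u f = (\<Sum>y\<in>range f. u y * p (f -` {y}))"

type_synonym ('a,'b) pref = "('a \<Rightarrow> 'b) \<Rightarrow> ('a \<Rightarrow> 'b) \<Rightarrow> bool"

definition bewley_rep :: "'a set set \<Rightarrow> 'b::real_vector set \<Rightarrow> ('a,'b) pref
    \<Rightarrow> ('b \<Rightarrow> real) \<Rightarrow> ('a set \<Rightarrow> real) set \<Rightarrow> bool" where
  "bewley_rep \<Sigma> X pr u C \<longleftrightarrow> affine_on X u \<and> C \<noteq> {} \<and> fconvex C \<and> compact C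
     \<and> C \<subseteq> fa_probs \<Sigma>
     \<and> (\<forall>f\<in>simple_acts \<Sigma> X. \<forall>g\<in>simple_acts \<Sigma> X.
           pr f g \<longleftrightarrow> (\<forall>p\<in>C. eu p u f > eu p u g))"

definition unique_bewley_rep :: "'a set set \<Rightarrow> 'b::real_vector set \<Rightarrow> ('a,'b) pref
    \<Rightarrow> ('b \<Rightarrow> real) \<Rightarrow> ('a set \<Rightarrow> real) set \<Rightarrow> bool" where
  "unique_bewley_rep \<Sigma> X pr u C \<longleftrightarrow> bewley_rep \<Sigma> X pr u C
     \<and> (\<forall>v D. bewley_rep \<Sigma> X pr v D \<longrightarrow>
            D = C \<and> (\<exists>a>0. \<exists>b. \<forall>x\<in>X. v x = a * u x + b))"

definition hp_rep :: "'a set set \<Rightarrow> 'b::real_vector set \<Rightarrow> ('a,'b) pref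
    \<Rightarrow> ('b \<Rightarrow> real) \<Rightarrow> ('a set \<Rightarrow> real) set \<Rightarrow> ('a set \<Rightarrow> real) set \<Rightarrow> bool" where
  "hp_rep \<Sigma> X pr u C D \<longleftrightarrow> affine_on X u
     \<and> fconvex C \<and> compact C \<and> C \<subseteq> fa_probs \<Sigma>
     \<and> fconvex D \<and> compact D \<and> D \<subseteq> fa_probs \<Sigma>
     \<and> C \<inter> D \<noteq> {}
     \<and> (\<forall>f\<in>simple_acts \<Sigma> X. \<forall>g\<in>simple_acts \<Sigma> X.
           pr f g \<longleftrightarrow> ((INF p\<in>C. eu p u f) > (INF p\<in>C. eu p u g)
                       \<and> (SUP p\<in>D. eu p u f) > (SUP p\<in>D. eu p u g)))"

definition unique_hp_rep :: "'a set set \<Rightarrow> 'b::real_vector set \<Rightarrow> ('a,'b) pref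
    \<Rightarrow> ('b \<Rightarrow> real) \<Rightarrow> ('a set \<Rightarrow> real) set \<Rightarrow> ('a set \<Rightarrow> real) set \<Rightarrow> bool" where
  "unique_hp_rep \<Sigma> X pr u C D \<longleftrightarrow> hp_rep \<Sigma> X pr u C D
     \<and> (\<forall>v C' D'. hp_rep \<Sigma> X pr v C' D' \<longrightarrow>
            C' = C \<and> D' = D \<and> (\<exists>a>0. \<exists>b. \<forall>x\<in>X. v x = a * u x + b))"

definition incomp :: "('a,'b) pref \<Rightarrow> ('a \<Rightarrow> 'b) \<Rightarrow> ('a \<Rightarrow> 'b) \<Rightarrow> bool" where
  "incomp pr f g \<longleftrightarrow> \<not> pr f g \<and> \<not> pr g f"

end

theory Submission
  imports Defs
begin


lemma fa_empty:
  assumes alg: "algebra UNIV \<Sigma>" and p: "p \<in> fa_probs \<Sigma>"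
  shows "p {} = 0"
proof -
  interpret algebra UNIV \<Sigma> by (rule alg)
  have "p ({} \<union> {}) = p {} + p {}" using p unfolding fa_probs_def by blast
  then show ?thesis by simp
qed

lemma fa_abs:
  assumes alg: "algebra UNIV \<Sigma>" and p: "p \<in> fa_probs \<Sigma>"
  shows "\<bar>p A\<bar> \<le> 1"
proof (cases "A \<in> \<Sigma>")
  case True
  interpret algebra UNIV \<Sigma> by (rule alg)
  have c: "UNIV - A \<in> \<Sigma>" using True by auto
  have "p (A \<union> (UNIV - A)) = p A + p (UNIV - A)" using p True c unfolding fa_probs_def by blast
  moreover have "A \<union> (UNIV - A) = UNIV" by auto
  moreover have "p UNIV = 1" "0 \<le> p A" "0 \<le> p (UNIV - A)" using p True c unfolding fa_probs_def by auto
  ultimately show ?thesis by auto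
next
  case False then show ?thesis using p unfolding fa_probs_def by auto
qed

lemma fa_union:
  assumes alg: "algebra UNIV \<Sigma>" and p: "p \<in> fa_probs \<Sigma>"
    and fin: "finite J" and B: "\<forall>j\<in>J. B j \<in> \<Sigma>"
    and disj: "\<forall>i\<in>J. \<forall>j\<in>J. i \<noteq> j \<longrightarrow> B i \<inter> B j = {}"
  shows "p (\<Union>j\<in>J. B j) = (\<Sum>j\<in>J. p (B j))"
  using fin B disj
proof (induction J rule: finite_induct)
  case empty
  then show ?case using fa_empty[OF alg p] by simp
next
  case (insert j J)
  interpret algebra UNIV \<Sigma> by (rule alg)
  have U: "(\<Union>i\<in>J. B i) \<in> \<Sigma>" using insert by auto
  have Bj: "B j \<in> \<Sigma>" using insert by auto
  have d: "B j \<inter> (\<Union>i\<in>J. B i) = {}" using insert.prems insert.hyps by auto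
  have "p (\<Union>i\<in>insert j J. B i) = p (B j \<union> (\<Union>i\<in>J. B i))" by simp
  also have "\<dots> = p (B j) + p (\<Union>i\<in>J. B i)" using p U Bj d unfolding fa_probs_def by blast
  also have "\<dots> = p (B j) + (\<Sum>i\<in>J. p (B i))" using insert by auto
  finally show ?case using insert.hyps by simp
qed

lemma sig_meas:
  assumes alg: "algebra UNIV \<Sigma>" and fin: "finite F" and FS: "F \<subseteq> \<Sigma>"
  shows "{s. P {A\<in>F. s \<in> A}} \<in> \<Sigma>"
proof -
  interpret algebra UNIV \<Sigma> by (rule alg)
  have atom: "{s. {A\<in>F. s \<in> A} = G} \<in> \<Sigma>" if G: "G \<subseteq> F" for G
  proof (cases "F = {}")
    case True
    then show ?thesis using G by auto
  next
    case False
    have "{s. {A\<in>F. s \<in> A} = G} = (\<Inter>A\<in>F. if A \<in> G then A else UNIV - A)"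
      using G by auto
    also have "\<dots> \<in> \<Sigma>" using False fin FS by (intro finite_INT) auto
    finally show ?thesis .
  qed
  have "{s. P {A\<in>F. s \<in> A}} = (\<Union>G\<in>{G. G \<subseteq> F \<and> P G}. {s. {A\<in>F. s \<in> A} = G})"
    by auto
  also have "\<dots> \<in> \<Sigma>" using fin atom by (intro finite_UN) auto
  finally show ?thesis .
qed

lemma eu_partition:
  assumes alg: "algebra UNIV \<Sigma>" and p: "p \<in> fa_probs \<Sigma>"
    and fin: "finite I" and B: "\<forall>i\<in>I. B i \<in> \<Sigma>" and ne: "\<forall>i\<in>I. B i \<noteq> {}"
    and disj: "\<forall>i\<in>I. \<forall>j\<in>I. i \<noteq> j \<longrightarrow> B i \<inter> B j = {}"
    and cov: "\<forall>s. \<exists>i\<in>I. s \<in> B i"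
    and const: "\<forall>i\<in>I. \<forall>s\<in>B i. f s = fv i"
  shows "eu p u f = (\<Sum>i\<in>I. u (fv i) * p (B i))"
proof -
  have rng: "range f = fv ` I"
  proof
    show "range f \<subseteq> fv ` I"
    proof
      fix y assume "y \<in> range f"
      then obtain s where s: "y = f s" by auto
      obtain i where "i \<in> I" "s \<in> B i" using cov by blast
      then show "y \<in> fv ` I" using const s by auto
    qed
    show "fv ` I \<subseteq> range f"
    proof
      fix y assume "y \<in> fv ` I"
      then obtain i where i: "i \<in> I" "y = fv i" by auto
      then obtain s where "s \<in> B i" using ne by blast
      then have "f s = y" using const i by auto
      then show "y \<in> range f" by auto
    qed
  qed
  have pre: "f -` {y} = (\<Union>i\<in>{i\<in>I. fv i = y}. B i)" for y
  proof
    show "f -` {y} \<subseteq> (\<Union>i\<in>{i\<in>I. fv i = y}. B i)"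
    proof
      fix s assume s: "s \<in> f -` {y}"
      obtain i where "i \<in> I" "s \<in> B i" using cov by blast
      then show "s \<in> (\<Union>i\<in>{i\<in>I. fv i = y}. B i)" using const s by auto
    qed
    show "(\<Union>i\<in>{i\<in>I. fv i = y}. B i) \<subseteq> f -` {y}" using const by auto
  qed
  have "eu p u f = (\<Sum>y\<in>fv ` I. u y * p (f -` {y}))" unfolding eu_def rng ..
  also have "\<dots> = (\<Sum>y\<in>fv ` I. u y * (\<Sum>i\<in>{i\<in>I. fv i = y}. p (B i)))"
    unfolding pre using fin B disj by (subst fa_union[OF alg p]) auto
  also have "\<dots> = (\<Sum>y\<in>fv ` I. (\<Sum>i\<in>{i\<in>I. fv i = y}. u (fv i) * p (B i)))"
    by (auto simp: sum_distrib_left intro!: sum.cong)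
  also have "\<dots> = (\<Sum>i\<in>I. u (fv i) * p (B i))"
    using sum.image_gen[OF fin, of "\<lambda>i. u (fv i) * p (B i)" fv] by simp
  finally show ?thesis .
qed



lemma hull_convex: "fconvex (fconvex_hull P)"
  unfolding fconvex_def fconvex_hull_def by blast

lemma hull_sub: "P \<subseteq> fconvex_hull P"
  unfolding fconvex_hull_def by blast

lemma hull_min: "P \<subseteq> K \<Longrightarrow> fconvex K \<Longrightarrow> fconvex_hull P \<subseteq> K"
  unfolding fconvex_hull_def by blast

lemma hull_mono: "P \<subseteq> Q \<Longrightarrow> fconvex_hull P \<subseteq> fconvex_hull Q"
  by (meson hull_convex hull_min hull_sub order_trans)

lemma hull_id: "fconvex K \<Longrightarrow> fconvex_hull K = K"
  by (simp add: hull_min hull_sub subset_antisym)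

lemma hull_hull_Un: "fconvex_hull (A \<union> B) = fconvex_hull (fconvex_hull A \<union> B)"
proof
  show "fconvex_hull (A \<union> B) \<subseteq> fconvex_hull (fconvex_hull A \<union> B)"
    by (intro hull_mono) (use hull_sub in blast)
  have "fconvex_hull A \<subseteq> fconvex_hull (A \<union> B)" by (intro hull_mono) blast
  moreover have "B \<subseteq> fconvex_hull (A \<union> B)" using hull_sub by blast
  ultimately show "fconvex_hull (fconvex_hull A \<union> B) \<subseteq> fconvex_hull (A \<union> B)"
    by (intro hull_min hull_convex) blast
qed

definition mixf :: "real \<times> ('a set \<Rightarrow> real) \<times> ('a set \<Rightarrow> real) \<Rightarrow> ('a set \<Rightarrow> real)" where
  "mixf x = (\<lambda>E. fst x * fst (snd x) E + (1 - fst x) * snd (snd x) E)"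

definition mix :: "('a set \<Rightarrow> real) set \<Rightarrow> ('a set \<Rightarrow> real) set \<Rightarrow> ('a set \<Rightarrow> real) set" where
  "mix A B = mixf ` ({0..1} \<times> A \<times> B)"

lemma mix_compact:
  assumes "compact A" "compact B"
  shows "compact (mix A B)"
  unfolding mix_def
proof (rule compact_continuous_image)
  show "compact ({0..1::real} \<times> A \<times> B)" using assms by (intro compact_Times) auto
  have c: "continuous_on UNIV (\<lambda>x::('a set \<Rightarrow> real). x E)" for E by simp
  have c1: "continuous_on S (\<lambda>x::real \<times> ('a set \<Rightarrow> real) \<times> ('a set \<Rightarrow> real). fst (snd x) E)" for S E
    by (rule continuous_on_compose2[OF c[of E] continuous_on_fst[OF continuous_on_snd[OF continuous_on_id]]]) auto
  have c2: "continuous_on S (\<lambda>x::real \<times> ('a set \<Rightarrow> real) \<times> ('a set \<Rightarrow> real). snd (snd x) E)" for S E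
    by (rule continuous_on_compose2[OF c[of E] continuous_on_snd[OF continuous_on_snd[OF continuous_on_id]]]) auto
  show "continuous_on ({0..1} \<times> A \<times> B) mixf"
    unfolding mixf_def
    by (intro continuous_on_coordinatewise_then_product continuous_intros c1 c2)
qed

lemma mix_convex:
  assumes A: "fconvex A" and B: "fconvex B"
  shows "fconvex (mix A B)"
  unfolding fconvex_def
proof (intro ballI allI impI)
  fix p q and s :: real
  assume p: "p \<in> mix A B" and q: "q \<in> mix A B" and s: "0 \<le> s \<and> s \<le> 1"
  obtain t1 a1 b1 where 1: "t1 \<in> {0..1}" "a1 \<in> A" "b1 \<in> B" "p = (\<lambda>E. t1 * a1 E + (1 - t1) * b1 E)"
    using p unfolding mix_def mixf_def by auto
  obtain t2 a2 b2 where 2: "t2 \<in> {0..1}" "a2 \<in> A" "b2 \<in> B" "q = (\<lambda>E. t2 * a2 E + (1 - t2) * b2 E)"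
    using q unfolding mix_def mixf_def by auto
  define T where "T = s * t1 + (1 - s) * t2"
  define a where "a = (if T = 0 then a1 else (\<lambda>E. (s * t1 / T) * a1 E + (1 - s * t1 / T) * a2 E))"
  define b where "b = (if T = 1 then b1 else (\<lambda>E. (s * (1 - t1) / (1 - T)) * b1 E + (1 - s * (1 - t1) / (1 - T)) * b2 E))"
  have st1: "0 \<le> s * t1" "0 \<le> (1 - s) * t2" using s 1 2 by auto
  have st2: "0 \<le> s * (1 - t1)" "0 \<le> (1 - s) * (1 - t2)" using s 1 2 by auto
  have T01: "0 \<le> T" "T \<le> 1" unfolding T_def using s 1 2 by (auto intro: convex_bound_le)
  have "a \<in> A"
  proof (cases "T = 0")
    case True then show ?thesis using 1 unfolding a_def by simp
  next
    case False
    then have "0 < T" using T01 by auto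
    moreover have "s * t1 \<le> T" unfolding T_def using st1 by simp
    ultimately have "0 \<le> s * t1 / T" "s * t1 / T \<le> 1" using st1 by (auto simp: divide_le_eq_1)
    then have "(\<lambda>E. (s * t1 / T) * a1 E + (1 - s * t1 / T) * a2 E) \<in> A"
      using A 1 2 unfolding fconvex_def by blast
    then show ?thesis using False unfolding a_def by simp
  qed
  moreover have "b \<in> B"
  proof (cases "T = 1")
    case True then show ?thesis using 1 unfolding b_def by simp
  next
    case False
    then have "0 < 1 - T" using T01 by auto
    moreover have "s * (1 - t1) \<le> 1 - T" unfolding T_def using st2 by (simp add: algebra_simps)
    ultimately have "0 \<le> s * (1 - t1) / (1 - T)" "s * (1 - t1) / (1 - T) \<le> 1" using st2 by (auto simp: divide_le_eq_1)
    then have "(\<lambda>E. (s * (1 - t1) / (1 - T)) * b1 E + (1 - s * (1 - t1) / (1 - T)) * b2 E) \<in> B"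
      using B 1 2 unfolding fconvex_def by blast
    then show ?thesis using False unfolding b_def by simp
  qed
  moreover have "T * a E = s * t1 * a1 E + (1 - s) * t2 * a2 E" for E
  proof (cases "T = 0")
    case True
    then have z: "s * t1 = 0" "(1 - s) * t2 = 0" using st1 unfolding T_def by linarith+
    have h: "s * t1 * a1 E = 0" "(1 - s) * t2 * a2 E = 0" by (simp_all only: z mult_zero_left)
    have "T * a E = 0" using True by simp
    then show ?thesis using h by linarith
  next
    case False
    have e1: "T * (s * t1 / T) = s * t1" using False by simp
    have e2: "T * (1 - s * t1 / T) = (1 - s) * t2" using False unfolding right_diff_distrib e1
      by (simp add: T_def)
    have "T * a E = T * (s * t1 / T) * a1 E + T * (1 - s * t1 / T) * a2 E"
      using False unfolding a_def by (simp add: algebra_simps)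
    then show ?thesis unfolding e1 e2 by simp
  qed
  moreover have "(1 - T) * b E = s * (1 - t1) * b1 E + (1 - s) * (1 - t2) * b2 E" for E
  proof (cases "T = 1")
    case True
    have "s * (1 - t1) + (1 - s) * (1 - t2) = 1 - T" unfolding T_def by (simp add: algebra_simps)
    then have "s * (1 - t1) = 0" "(1 - s) * (1 - t2) = 0" using st2 True by linarith+
    then have h: "s * (1 - t1) * b1 E = 0" "(1 - s) * (1 - t2) * b2 E = 0" by (simp_all only: mult_zero_left)
    have "(1 - T) * b E = 0" using True by simp
    then show ?thesis using h by linarith
  next
    case False
    then have F: "1 - T \<noteq> 0" by simp
    have e1: "(1 - T) * (s * (1 - t1) / (1 - T)) = s * (1 - t1)" using F by simp
    have "(1 - T) * (1 - s * (1 - t1) / (1 - T)) = (1 - T) - s * (1 - t1)"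
      by (subst right_diff_distrib) (simp only: e1 mult_1_right)
    also have "\<dots> = (1 - s) * (1 - t2)" unfolding T_def by (simp add: algebra_simps)
    finally have e2: "(1 - T) * (1 - s * (1 - t1) / (1 - T)) = (1 - s) * (1 - t2)" .
    have "(1 - T) * b E = (1 - T) * (s * (1 - t1) / (1 - T)) * b1 E + (1 - T) * (1 - s * (1 - t1) / (1 - T)) * b2 E"
      using False unfolding b_def by (simp add: algebra_simps)
    then show ?thesis unfolding e1 e2 by simp
  qed
  ultimately have "(\<lambda>E. s * p E + (1 - s) * q E) = mixf (T, a, b)"
    unfolding mixf_def 1 2 by (auto simp: algebra_simps fun_eq_iff)
  moreover have "(T, a, b) \<in> {0..1} \<times> A \<times> B" using T01 \<open>a \<in> A\<close> \<open>b \<in> B\<close> by auto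
  ultimately show "(\<lambda>E. s * p E + (1 - s) * q E) \<in> mix A B" unfolding mix_def by blast
qed

lemma hull_Un_mix:
  assumes A: "fconvex A" and B: "fconvex B" and "A \<noteq> {}" "B \<noteq> {}"
  shows "fconvex_hull (A \<union> B) = mix A B"
proof
  obtain a b where ab: "a \<in> A" "b \<in> B" using assms by auto
  have "A \<subseteq> mix A B"
  proof
    fix x assume "x \<in> A"
    then have "(1::real, x, b) \<in> {0..1} \<times> A \<times> B" using ab by auto
    moreover have "mixf (1::real, x, b) = x" unfolding mixf_def by auto
    ultimately show "x \<in> mix A B" unfolding mix_def by (metis rev_image_eqI)
  qed
  moreover have "B \<subseteq> mix A B"
  proof
    fix x assume "x \<in> B"
    then have "(0::real, a, x) \<in> {0..1} \<times> A \<times> B" using ab by auto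
    moreover have "mixf (0::real, a, x) = x" unfolding mixf_def by auto
    ultimately show "x \<in> mix A B" unfolding mix_def by (metis rev_image_eqI)
  qed
  ultimately show "fconvex_hull (A \<union> B) \<subseteq> mix A B"
    by (intro hull_min mix_convex A B) auto
  show "mix A B \<subseteq> fconvex_hull (A \<union> B)"
  proof
    fix x assume "x \<in> mix A B"
    then obtain t a b where t: "t \<in> {0..1}" "a \<in> A" "b \<in> B" "x = (\<lambda>E. t * a E + (1 - t) * b E)"
      unfolding mix_def mixf_def by auto
    have "a \<in> fconvex_hull (A \<union> B)" "b \<in> fconvex_hull (A \<union> B)" using t hull_sub by blast+
    then show "x \<in> fconvex_hull (A \<union> B)" using hull_convex[of "A \<union> B"] t unfolding fconvex_def by auto
  qed
qed

lemma hull_union_compact: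
  fixes C :: "nat \<Rightarrow> ('a set \<Rightarrow> real) set"
  assumes "\<forall>i\<in>{1..n}. compact (C i) \<and> fconvex (C i) \<and> C i \<noteq> {}"
  shows "m \<le> n \<Longrightarrow> compact (fconvex_hull (\<Union>i\<in>{1..m}. C i))"
proof (induction m)
  case 0
  have "fconvex_hull {} = ({} :: ('a set \<Rightarrow> real) set)" by (rule hull_id) (simp add: fconvex_def)
  then show ?case by simp
next
  case (Suc m)
  have Cm: "compact (C (Suc m))" "fconvex (C (Suc m))" "C (Suc m) \<noteq> {}" using assms Suc.prems by auto
  have IH: "compact (fconvex_hull (\<Union>i\<in>{1..m}. C i))" using Suc by auto
  have eq: "(\<Union>i\<in>{1..Suc m}. C i) = (\<Union>i\<in>{1..m}. C i) \<union> C (Suc m)"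
    by (simp add: atLeastAtMostSuc_conv Un_commute)
  have h: "fconvex_hull (\<Union>i\<in>{1..Suc m}. C i) = fconvex_hull (fconvex_hull (\<Union>i\<in>{1..m}. C i) \<union> C (Suc m))"
    unfolding eq by (rule hull_hull_Un)
  show ?case
  proof (cases "fconvex_hull (\<Union>i\<in>{1..m}. C i) = {}")
    case True
    then show ?thesis unfolding h using Cm by (simp add: hull_id)
  next
    case False
    then show ?thesis unfolding h using Cm IH
      by (subst hull_Un_mix) (auto intro: hull_convex mix_compact)
  qed
qed



lemma sep_linear:
  fixes K :: "('a set \<Rightarrow> real) set"
  assumes alg: "algebra UNIV \<Sigma>" and Kc: "compact K" and Kcv: "fconvex K"
    and KP: "K \<subseteq> fa_probs \<Sigma>" and p0: "p0 \<in> fa_probs \<Sigma>" and p0K: "p0 \<notin> K" and Kne: "K \<noteq> {}"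
  shows "\<exists>F w. finite F \<and> F \<subseteq> \<Sigma> \<and> (\<forall>q\<in>K. (\<Sum>A\<in>F. w A * q A) > (\<Sum>A\<in>F. w A * p0 A))"
proof -
  have diff: "\<exists>A. A \<in> \<Sigma> \<and> q A \<noteq> p0 A" if q: "q \<in> K" for q
  proof -
    have "q \<noteq> p0" using q p0K by auto
    then obtain A where A: "q A \<noteq> p0 A" by (auto simp: fun_eq_iff)
    have "A \<in> \<Sigma>"
    proof (rule ccontr)
      assume "A \<notin> \<Sigma>"
      then have "q A = 0" "p0 A = 0" using q KP p0 unfolding fa_probs_def by auto
      then show False using A by simp
    qed
    then show ?thesis using A by blast
  qed
  define Aq where "Aq q = (SOME A. A \<in> \<Sigma> \<and> q A \<noteq> p0 A)" for q
  have Aq: "Aq q \<in> \<Sigma> \<and> q (Aq q) \<noteq> p0 (Aq q)" if "q \<in> K" for q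
    unfolding Aq_def by (rule someI_ex) (rule diff[OF that])
  define V where "V q = {r. \<bar>q (Aq q) - p0 (Aq q)\<bar> / 2 < \<bar>r (Aq q) - p0 (Aq q)\<bar>}" for q
  have cA: "continuous_on UNIV (\<lambda>r::'a set \<Rightarrow> real. \<bar>r A - p0 A\<bar>)" for A
    by (intro continuous_intros continuous_on_product_coordinates)
  have "open (V q)" for q
    unfolding V_def by (rule open_Collect_less) (auto intro: cA)
  moreover have "K \<subseteq> (\<Union>q\<in>K. V q)"
  proof
    fix q assume q: "q \<in> K"
    then have "q (Aq q) - p0 (Aq q) \<noteq> 0" using Aq by auto
    then have "q \<in> V q" unfolding V_def by auto
    then show "q \<in> (\<Union>q\<in>K. V q)" using q by blast
  qed
  ultimately obtain K' where K': "K' \<subseteq> K" "finite K'" "K \<subseteq> (\<Union>q\<in>K'. V q)"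
    using compactE_image[OF Kc, of K V] by blast
  have K'ne: "K' \<noteq> {}" using K' Kne by auto
  define F where "F = Aq ` K'"
  define eps where "eps = Min ((\<lambda>q. \<bar>q (Aq q) - p0 (Aq q)\<bar> / 2) ` K')"
  have finF: "finite F" unfolding F_def using K' by auto
  have FS: "F \<subseteq> \<Sigma>" unfolding F_def using K' Aq by auto
  have eps_pos: "eps > 0" unfolding eps_def using K' K'ne Aq
    by (subst Min_gr_iff) auto
  have near: "\<exists>A\<in>F. eps \<le> \<bar>r A - p0 A\<bar>" if r: "r \<in> K" for r
  proof -
    obtain q where q: "q \<in> K'" "r \<in> V q" using K' r by auto
    have "eps \<le> \<bar>q (Aq q) - p0 (Aq q)\<bar> / 2" unfolding eps_def using K' q by (intro Min_le) auto
    also have "\<dots> < \<bar>r (Aq q) - p0 (Aq q)\<bar>" using q unfolding V_def by auto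
    finally have e: "eps < \<bar>r (Aq q) - p0 (Aq q)\<bar>" .
    show ?thesis
    proof (rule bexI)
      show "eps \<le> \<bar>r (Aq q) - p0 (Aq q)\<bar>" using e by simp
      show "Aq q \<in> F" unfolding F_def using q(1) by simp
    qed
  qed
  define D where "D r = (\<Sum>A\<in>F. (r A - p0 A)^2)" for r :: "'a set \<Rightarrow> real"
  have "continuous_on K D" unfolding D_def
    by (intro continuous_intros continuous_on_subset[OF continuous_on_product_coordinates]) auto
  then obtain qs where qs: "qs \<in> K" "\<forall>r\<in>K. D qs \<le> D r"
    using continuous_attains_inf[OF Kc Kne] by blast
  have Dpos: "D qs > 0"
  proof -
    obtain A where A: "A \<in> F" "eps \<le> \<bar>qs A - p0 A\<bar>" using near qs by blast
    have "0 < eps^2" using eps_pos by simp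
    also have "eps^2 \<le> \<bar>qs A - p0 A\<bar>^2" using A eps_pos by (intro power_mono) auto
    also have "\<dots> = (qs A - p0 A)^2" by simp
    also have "\<dots> \<le> D qs" unfolding D_def using A finF by (intro member_le_sum) auto
    finally show ?thesis .
  qed
  define w where "w A = qs A - p0 A" for A
  have key: "0 \<le> (\<Sum>A\<in>F. w A * (q A - qs A))" if q: "q \<in> K" for q
  proof (rule ccontr)
    define S where "S = (\<Sum>A\<in>F. w A * (q A - qs A))"
    define Q where "Q = (\<Sum>A\<in>F. (q A - qs A)^2)"
    assume "\<not> 0 \<le> (\<Sum>A\<in>F. w A * (q A - qs A))"
    then have Sneg: "S < 0" unfolding S_def by simp
    have Qnn: "0 \<le> Q" unfolding Q_def by (intro sum_nonneg) auto
    have Dt: "D (\<lambda>E. t * q E + (1 - t) * qs E) = D qs + 2 * t * S + t^2 * Q" for t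
    proof -
      have "D (\<lambda>E. t * q E + (1 - t) * qs E) = (\<Sum>A\<in>F. (qs A - p0 A)^2 + 2 * t * (w A * (q A - qs A)) + t^2 * (q A - qs A)^2)"
        unfolding D_def w_def by (rule sum.cong) (simp_all add: power2_eq_square algebra_simps)
      also have "\<dots> = D qs + 2 * t * S + t^2 * Q"
        unfolding D_def S_def Q_def by (simp add: sum.distrib sum_distrib_left)
      finally show ?thesis .
    qed
    define t where "t = min 1 (- S / (Q + 1))"
    have t0: "0 < t" unfolding t_def using Sneg Qnn by (auto simp: divide_neg_pos)
    have t1: "t \<le> 1" unfolding t_def by simp
    have "(\<lambda>E. t * q E + (1 - t) * qs E) \<in> K" using Kcv q qs t0 t1 unfolding fconvex_def by auto
    then have "D qs \<le> D qs + 2 * t * S + t^2 * Q" using qs Dt by auto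
    then have "0 \<le> t * (2 * S + t * Q)" by (simp add: power2_eq_square algebra_simps)
    then have h1: "0 \<le> 2 * S + t * Q" using t0 by (simp add: zero_le_mult_iff)
    have "t * Q \<le> (- S / (Q + 1)) * Q" unfolding t_def using Qnn by (intro mult_right_mono) auto
    also have "\<dots> = - S * (Q / (Q + 1))" by simp
    also have "\<dots> \<le> - S * 1" using Sneg Qnn by (intro mult_left_mono) auto
    finally have "t * Q \<le> - S" by simp
    then show False using h1 Sneg by linarith
  qed
  show ?thesis
  proof (intro exI conjI ballI)
    show "finite F" "F \<subseteq> \<Sigma>" by (fact finF, fact FS)
    fix q assume q: "q \<in> K"
    have "(\<Sum>A\<in>F. w A * q A) - (\<Sum>A\<in>F. w A * p0 A) = (\<Sum>A\<in>F. w A * (q A - qs A)) + (\<Sum>A\<in>F. w A * (qs A - p0 A))"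
      by (simp add: sum_subtractf[symmetric] sum.distrib[symmetric] algebra_simps)
    also have "(\<Sum>A\<in>F. w A * (qs A - p0 A)) = D qs" unfolding D_def w_def by (simp add: power2_eq_square)
    finally show "(\<Sum>A\<in>F. w A * q A) > (\<Sum>A\<in>F. w A * p0 A)" using key[OF q] Dpos by linarith
  qed
qed



lemma act_from_linear:
  fixes u :: "'b::real_vector \<Rightarrow> real"
  assumes alg: "algebra UNIV \<Sigma>" and convX: "convex X" and u_aff: "affine_on X u"
    and x1: "x1 \<in> X" and x2: "x2 \<in> X" and ux: "u x1 < u x2"
    and finF: "finite F" and FS: "F \<subseteq> \<Sigma>" and p0: "p0 \<in> fa_probs \<Sigma>"
  shows "\<exists>f\<in>simple_acts \<Sigma> X. \<exists>x\<in>X. \<exists>c>0. \<forall>q\<in>fa_probs \<Sigma>.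
            eu q u f = u x + c * ((\<Sum>A\<in>F. w A * q A) - (\<Sum>A\<in>F. w A * p0 A))"
proof -
  define W where "W = (\<Sum>A\<in>F. \<bar>w A\<bar>)"
  define R where "R = 2 * W + 1"
  define c0 where "c0 = (\<Sum>A\<in>F. w A * p0 A)"
  define sig where "sig s = {A\<in>F. s \<in> A}" for s
  define psi where "psi G = ((\<Sum>A\<in>G. w A) - c0) / R" for G
  define tt where "tt v = (1 + v) / 2" for v :: real
  define xp where "xp v = tt v *\<^sub>R x2 + (1 - tt v) *\<^sub>R x1" for v
  define mid where "mid = (u x1 + u x2) / 2"
  define rad where "rad = (u x2 - u x1) / 2"
  have W0: "0 \<le> W" unfolding W_def by (intro sum_nonneg) auto
  have R0: "0 < R" unfolding R_def using W0 by simp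
  have xp: "xp v \<in> X \<and> u (xp v) = mid + rad * v" if v: "\<bar>v\<bar> \<le> 1" for v
  proof
    have t: "0 \<le> tt v" "tt v \<le> 1" unfolding tt_def using v by auto
    show "xp v \<in> X" unfolding xp_def using convexD[OF convX x2 x1] t by simp
    have "u (xp v) = tt v * u x2 + (1 - tt v) * u x1"
      unfolding xp_def using u_aff x1 x2 t unfolding affine_on_def by blast
    then show "u (xp v) = mid + rad * v" unfolding mid_def rad_def tt_def by (simp add: field_simps)
  qed
  have c0W: "\<bar>c0\<bar> \<le> W"
  proof -
    have "\<bar>c0\<bar> \<le> (\<Sum>A\<in>F. \<bar>w A * p0 A\<bar>)" unfolding c0_def by (rule sum_abs)
    also have "\<dots> \<le> W" unfolding W_def
    proof (intro sum_mono)
      fix A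
      have "\<bar>w A\<bar> * \<bar>p0 A\<bar> \<le> \<bar>w A\<bar> * 1" using fa_abs[OF alg p0] by (intro mult_left_mono) auto
      then show "\<bar>w A * p0 A\<bar> \<le> \<bar>w A\<bar>" by (simp add: abs_mult)
    qed
    finally show ?thesis .
  qed
  have psi1: "\<bar>psi G\<bar> \<le> 1" if G: "G \<subseteq> F" for G
  proof -
    have "\<bar>\<Sum>A\<in>G. w A\<bar> \<le> (\<Sum>A\<in>G. \<bar>w A\<bar>)" by (rule sum_abs)
    also have "\<dots> \<le> W" unfolding W_def using G finF by (intro sum_mono2) auto
    finally have sG: "\<bar>\<Sum>A\<in>G. w A\<bar> \<le> W" .
    have "\<bar>(\<Sum>A\<in>G. w A) - c0\<bar> \<le> \<bar>\<Sum>A\<in>G. w A\<bar> + \<bar>c0\<bar>" by (rule abs_triangle_ineq4)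
    also have "\<dots> \<le> R" unfolding R_def using sG c0W by simp
    finally have n: "\<bar>(\<Sum>A\<in>G. w A) - c0\<bar> \<le> R" .
    have "\<bar>psi G\<bar> = \<bar>(\<Sum>A\<in>G. w A) - c0\<bar> / R" unfolding psi_def using R0 by (simp add: abs_divide)
    also have "\<dots> \<le> 1" using n R0 by (simp add: divide_le_eq_1)
    finally show ?thesis .
  qed
  have sigF: "sig s \<subseteq> F" for s unfolding sig_def by auto
  define f where "f s = xp (psi (sig s))" for s
  have rngf: "range f \<subseteq> (\<lambda>G. xp (psi G)) ` Pow F" unfolding f_def using sigF by auto
  have fact: "f \<in> simple_acts \<Sigma> X"
    unfolding simple_acts_def
  proof (intro CollectI conjI allI)
    show "finite (range f)" using rngf finF by (meson finite_Pow_iff finite_imageI finite_subset)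
    show "range f \<subseteq> X"
    proof
      fix y assume "y \<in> range f"
      then obtain s where s: "y = xp (psi (sig s))" unfolding f_def by auto
      have "\<bar>psi (sig s)\<bar> \<le> 1" by (rule psi1[OF sigF])
      then show "y \<in> X" using xp s by blast
    qed
    fix y
    have "f -` {y} = {s. (\<lambda>G. xp (psi G) = y) {A\<in>F. s \<in> A}}" unfolding f_def sig_def vimage_def by simp
    moreover have "{s. (\<lambda>G. xp (psi G) = y) {A\<in>F. s \<in> A}} \<in> \<Sigma>"
      by (rule sig_meas[OF alg finF FS, of "\<lambda>G. xp (psi G) = y"])
    ultimately show "f -` {y} \<in> \<Sigma>" by simp
  qed
  define I where "I = range sig"
  define B where "B G = {s. sig s = G}" for G
  have "I \<subseteq> Pow F" unfolding I_def using sigF by auto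
  then have finI: "finite I" using finF by (meson finite_Pow_iff finite_subset)
  have BS: "B G \<in> \<Sigma>" for G
  proof -
    have "B G = {s. (\<lambda>H. H = G) {A\<in>F. s \<in> A}}" unfolding B_def sig_def by simp
    moreover have "{s. (\<lambda>H. H = G) {A\<in>F. s \<in> A}} \<in> \<Sigma>"
      by (rule sig_meas[OF alg finF FS, of "\<lambda>H. H = G"])
    ultimately show ?thesis by simp
  qed
  have Bdisj: "\<forall>i\<in>I. \<forall>j\<in>I. i \<noteq> j \<longrightarrow> B i \<inter> B j = {}" unfolding B_def by auto
  have Bne: "\<forall>G\<in>I. B G \<noteq> {}" unfolding I_def B_def by auto
  have cov: "\<forall>s. \<exists>G\<in>I. s \<in> B G" unfolding I_def B_def by auto
  have const: "\<forall>G\<in>I. \<forall>s\<in>B G. f s = xp (psi G)" unfolding B_def f_def by auto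
  have BS': "\<forall>G\<in>I. B G \<in> \<Sigma>" using BS by blast
  have psiI: "\<bar>psi G\<bar> \<le> 1" if "G \<in> I" for G
    using that psi1 sigF unfolding I_def by blast
  have Rne: "R \<noteq> 0" using R0 by simp
  have eq: "eu q u f = u (xp 0) + (rad / R) * ((\<Sum>A\<in>F. w A * q A) - c0)" if q: "q \<in> fa_probs \<Sigma>" for q
  proof -
    have "eu q u f = (\<Sum>G\<in>I. u (xp (psi G)) * q (B G))"
      by (rule eu_partition[OF alg q finI BS' Bne Bdisj cov const])
    also have "\<dots> = (\<Sum>G\<in>I. (mid + rad * psi G) * q (B G))"
    proof (rule sum.cong[OF refl])
      fix G assume "G \<in> I"
      then have "u (xp (psi G)) = mid + rad * psi G" using xp psiI by blast
      then show "u (xp (psi G)) * q (B G) = (mid + rad * psi G) * q (B G)" by simp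
    qed
    also have "\<dots> = (\<Sum>G\<in>I. mid * q (B G) + (rad / R) * ((\<Sum>A\<in>G. w A) * q (B G)) - (rad / R * c0) * q (B G))"
    proof (rule sum.cong[OF refl])
      fix G
      have h: "rad * psi G = (rad / R) * (\<Sum>A\<in>G. w A) - (rad / R) * c0"
        unfolding psi_def using Rne by (simp add: field_simps)
      have gen: "(m + (k * S - k * c)) * b = m * b + k * (S * b) - (k * c) * b" for m k S c b :: real
        by (simp add: algebra_simps)
      show "(mid + rad * psi G) * q (B G) = mid * q (B G) + (rad / R) * ((\<Sum>A\<in>G. w A) * q (B G)) - (rad / R * c0) * q (B G)"
        unfolding h by (rule gen)
    qed
    also have "\<dots> = mid * (\<Sum>G\<in>I. q (B G)) + (rad / R) * (\<Sum>G\<in>I. (\<Sum>A\<in>G. w A) * q (B G)) - (rad / R * c0) * (\<Sum>G\<in>I. q (B G))"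
      by (simp only: sum.distrib sum_subtractf sum_distrib_left)
    also have "(\<Sum>G\<in>I. q (B G)) = 1"
    proof -
      have "(\<Sum>G\<in>I. q (B G)) = q (\<Union>G\<in>I. B G)"
        using fa_union[OF alg q finI BS' Bdisj] by simp
      also have "(\<Union>G\<in>I. B G) = UNIV" unfolding I_def B_def by auto
      finally show ?thesis using q unfolding fa_probs_def by simp
    qed
    also have "(\<Sum>G\<in>I. (\<Sum>A\<in>G. w A) * q (B G)) = (\<Sum>A\<in>F. w A * q A)"
    proof -
      have "(\<Sum>G\<in>I. (\<Sum>A\<in>G. w A) * q (B G)) = (\<Sum>G\<in>I. \<Sum>A\<in>{A. A \<in> F \<and> A \<in> G}. w A * q (B G))"
      proof (rule sum.cong[OF refl])
        fix G assume "G \<in> I"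
        then have "{A. A \<in> F \<and> A \<in> G} = G" using sigF unfolding I_def by auto
        then show "(\<Sum>A\<in>G. w A) * q (B G) = (\<Sum>A\<in>{A. A \<in> F \<and> A \<in> G}. w A * q (B G))"
          by (simp add: sum_distrib_right)
      qed
      also have "\<dots> = (\<Sum>A\<in>F. \<Sum>G\<in>{G. G \<in> I \<and> A \<in> G}. w A * q (B G))"
        by (rule sum.swap_restrict[OF finI finF, of "\<lambda>G A. w A * q (B G)" "\<lambda>G A. A \<in> G"])
      also have "\<dots> = (\<Sum>A\<in>F. w A * q A)"
      proof (rule sum.cong[OF refl])
        fix A assume A: "A \<in> F"
        have fJ: "finite {G. G \<in> I \<and> A \<in> G}" by (rule finite_subset[OF _ finI]) blast
        have BJ: "\<forall>j\<in>{G. G \<in> I \<and> A \<in> G}. B j \<in> \<Sigma>" using BS by blast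
        have dJ: "\<forall>i\<in>{G. G \<in> I \<and> A \<in> G}. \<forall>j\<in>{G. G \<in> I \<and> A \<in> G}. i \<noteq> j \<longrightarrow> B i \<inter> B j = {}"
          using Bdisj by blast
        have "(\<Sum>G\<in>{G. G \<in> I \<and> A \<in> G}. q (B G)) = q (\<Union>G\<in>{G. G \<in> I \<and> A \<in> G}. B G)"
          using fa_union[OF alg q fJ BJ dJ] by simp
        also have "(\<Union>G\<in>{G. G \<in> I \<and> A \<in> G}. B G) = A"
          using A unfolding I_def B_def sig_def by auto
        finally have "(\<Sum>G\<in>{G. G \<in> I \<and> A \<in> G}. q (B G)) = q A" .
        then show "(\<Sum>G\<in>{G. G \<in> I \<and> A \<in> G}. w A * q (B G)) = w A * q A"
          by (simp add: sum_distrib_left[symmetric])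
      qed
      finally show ?thesis .
    qed
    finally have "eu q u f = mid + (rad / R) * ((\<Sum>A\<in>F. w A * q A) - c0)"
      by (simp add: algebra_simps)
    moreover have "u (xp 0) = mid" using xp[of 0] by simp
    ultimately show ?thesis by simp
  qed
  have "xp 0 \<in> X" using xp[of 0] by simp
  moreover have "rad / R > 0" unfolding rad_def using ux R0 by simp
  ultimately show ?thesis using fact eq unfolding c0_def by blast
qed

lemma eu_const:
  assumes "p \<in> fa_probs \<Sigma>"
  shows "eu p u (\<lambda>_. x) = u x"
proof -
  have "range (\<lambda>_::'a. x) = {x}" by auto
  then show ?thesis using assms unfolding eu_def fa_probs_def by simp
qed

lemma const_act:
  assumes alg: "algebra UNIV \<Sigma>" and x: "x \<in> X"
  shows "(\<lambda>_. x) \<in> simple_acts \<Sigma> X"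
proof -
  interpret algebra UNIV \<Sigma> by (rule alg)
  have "(\<lambda>_::'a. x) -` {y} \<in> \<Sigma>" for y by (cases "x = y") auto
  moreover have "range (\<lambda>_::'a. x) = {x}" by auto
  ultimately show ?thesis unfolding simple_acts_def using x by auto
qed

lemma eu_cont: "continuous_on S (\<lambda>p. eu p u f)"
  unfolding eu_def
  by (intro continuous_intros continuous_on_subset[OF continuous_on_product_coordinates]) auto

lemma eu_lin: "eu (\<lambda>E. t * p E + (1 - t) * q E) u f = t * eu p u f + (1 - t) * eu q u f"
proof -
  have "eu (\<lambda>E. t * p E + (1 - t) * q E) u f = (\<Sum>y\<in>range f. t * (u y * p (f -` {y})) + (1 - t) * (u y * q (f -` {y})))"
    unfolding eu_def by (rule sum.cong) (simp_all add: algebra_simps)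
  also have "\<dots> = t * eu p u f + (1 - t) * eu q u f"
    unfolding eu_def by (simp only: sum.distrib sum_distrib_left)
  finally show ?thesis .
qed



lemma att_inf:
  assumes "compact C" "C \<noteq> {}"
  shows "\<exists>p\<in>C. (INF q\<in>C. eu q u f) = eu p u f \<and> (\<forall>q\<in>C. eu p u f \<le> eu q u f)"
proof -
  obtain p where p: "p \<in> C" "\<forall>q\<in>C. eu p u f \<le> eu q u f"
    using continuous_attains_inf[OF assms eu_cont] by blast
  have "bdd_below ((\<lambda>q. eu q u f) ` C)" using p by (intro bdd_belowI2) auto
  then have "(INF q\<in>C. eu q u f) \<le> eu p u f" using p by (intro cINF_lower) auto
  moreover have "eu p u f \<le> (INF q\<in>C. eu q u f)" using p assms by (intro cINF_greatest) auto
  ultimately have "(INF q\<in>C. eu q u f) = eu p u f" by linarith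
  then show ?thesis using p by blast
qed

lemma att_sup:
  assumes "compact C" "C \<noteq> {}"
  shows "\<exists>p\<in>C. (SUP q\<in>C. eu q u f) = eu p u f \<and> (\<forall>q\<in>C. eu q u f \<le> eu p u f)"
proof -
  obtain p where p: "p \<in> C" "\<forall>q\<in>C. eu q u f \<le> eu p u f"
    using continuous_attains_sup[OF assms eu_cont] by blast
  have "bdd_above ((\<lambda>q. eu q u f) ` C)" using p by (intro bdd_aboveI2) auto
  then have "eu p u f \<le> (SUP q\<in>C. eu q u f)" using p by (intro cSUP_upper) auto
  moreover have "(SUP q\<in>C. eu q u f) \<le> eu p u f" using p assms by (intro cSUP_least) auto
  ultimately have "(SUP q\<in>C. eu q u f) = eu p u f" by linarith
  then show ?thesis using p by blast
qed

lemma INF_const_act: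
  assumes "C \<subseteq> fa_probs \<Sigma>" "C \<noteq> {}"
  shows "(INF q\<in>C. eu q u (\<lambda>_. x)) = u x" "(SUP q\<in>C. eu q u (\<lambda>_. x)) = u x"
proof -
  have "(\<lambda>q. eu q u (\<lambda>_. x)) ` C = (\<lambda>q. u x) ` C"
  proof (rule image_cong[OF refl])
    fix q assume "q \<in> C"
    then have "q \<in> fa_probs \<Sigma>" using assms(1) by blast
    then show "eu q u (\<lambda>_. x) = u x" by (rule eu_const)
  qed
  then show "(INF q\<in>C. eu q u (\<lambda>_. x)) = u x" "(SUP q\<in>C. eu q u (\<lambda>_. x)) = u x"
    using assms(2) by simp_all
qed



lemma soc_props:
  assumes soc: "hp_rep \<Sigma> X pr u C C \<or> bewley_rep \<Sigma> X pr u C"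
  shows "C \<noteq> {} \<and> fconvex C \<and> compact C \<and> C \<subseteq> fa_probs \<Sigma>"
    and "\<And>f g. f \<in> simple_acts \<Sigma> X \<Longrightarrow> g \<in> simple_acts \<Sigma> X \<Longrightarrow>
            (\<forall>p\<in>C. eu p u f > eu p u g) \<Longrightarrow> pr f g"
    and "\<And>f x p. f \<in> simple_acts \<Sigma> X \<Longrightarrow> (\<lambda>_. x) \<in> simple_acts \<Sigma> X \<Longrightarrow> p \<in> C \<Longrightarrow>
            eu p u f \<le> u x \<Longrightarrow> \<not> pr f (\<lambda>_. x)"
    and "\<And>f x p. f \<in> simple_acts \<Sigma> X \<Longrightarrow> (\<lambda>_. x) \<in> simple_acts \<Sigma> X \<Longrightarrow> p \<in> C \<Longrightarrow>
            u x \<le> eu p u f \<Longrightarrow> \<not> pr (\<lambda>_. x) f"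
proof -
  show S1: "C \<noteq> {} \<and> fconvex C \<and> compact C \<and> C \<subseteq> fa_probs \<Sigma>"
    using soc unfolding hp_rep_def bewley_rep_def by blast
  then have Cc: "compact C" and Cne: "C \<noteq> {}" and CP: "C \<subseteq> fa_probs \<Sigma>" by auto
  have hpc: "pr f g \<longleftrightarrow> ((INF p\<in>C. eu p u f) > (INF p\<in>C. eu p u g) \<and> (SUP p\<in>C. eu p u f) > (SUP p\<in>C. eu p u g))"
    if "hp_rep \<Sigma> X pr u C C" "f \<in> simple_acts \<Sigma> X" "g \<in> simple_acts \<Sigma> X" for f g
    using that unfolding hp_rep_def by blast
  have bwc: "pr f g \<longleftrightarrow> (\<forall>p\<in>C. eu p u f > eu p u g)"
    if "bewley_rep \<Sigma> X pr u C" "f \<in> simple_acts \<Sigma> X" "g \<in> simple_acts \<Sigma> X" for f g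
    using that unfolding bewley_rep_def by blast
  have ec: "eu p u (\<lambda>_. x) = u x" if "p \<in> C" for p x
    using that CP by (intro eu_const) blast
  {
    fix f g assume f: "f \<in> simple_acts \<Sigma> X" and g: "g \<in> simple_acts \<Sigma> X"
      and gt: "\<forall>p\<in>C. eu p u f > eu p u g"
    show "pr f g"
      using soc
    proof
      assume hp: "hp_rep \<Sigma> X pr u C C"
      obtain pf where pf: "pf \<in> C" "(INF q\<in>C. eu q u f) = eu pf u f" using att_inf[OF Cc Cne] by blast
      obtain pg where pg: "pg \<in> C" "(INF q\<in>C. eu q u g) = eu pg u g" "\<forall>q\<in>C. eu pg u g \<le> eu q u g"
        using att_inf[OF Cc Cne] by blast
      obtain pf' where pf': "pf' \<in> C" "(SUP q\<in>C. eu q u f) = eu pf' u f" "\<forall>q\<in>C. eu q u f \<le> eu pf' u f"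
        using att_sup[OF Cc Cne] by blast
      obtain pg' where pg': "pg' \<in> C" "(SUP q\<in>C. eu q u g) = eu pg' u g" using att_sup[OF Cc Cne] by blast
      have "eu pg u g \<le> eu pf u g" using pg pf by blast
      moreover have "eu pf u g < eu pf u f" using gt pf by blast
      ultimately have 1: "(INF q\<in>C. eu q u f) > (INF q\<in>C. eu q u g)" using pf pg by linarith
      have "eu pg' u f \<le> eu pf' u f" using pf' pg' by blast
      moreover have "eu pg' u g < eu pg' u f" using gt pg' by blast
      ultimately have 2: "(SUP q\<in>C. eu q u f) > (SUP q\<in>C. eu q u g)" using pf' pg' by linarith
      show "pr f g" using hpc[OF hp f g] 1 2 by blast
    next
      assume "bewley_rep \<Sigma> X pr u C"
      then show "pr f g" using bwc f g gt by blast
    qed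
  }
  {
    fix f x p assume f: "f \<in> simple_acts \<Sigma> X" and x: "(\<lambda>_. x) \<in> simple_acts \<Sigma> X"
      and p: "p \<in> C" and le: "eu p u f \<le> u x"
    show "\<not> pr f (\<lambda>_. x)"
      using soc
    proof
      assume hp: "hp_rep \<Sigma> X pr u C C"
      obtain pf where pf: "pf \<in> C" "(INF q\<in>C. eu q u f) = eu pf u f" "\<forall>q\<in>C. eu pf u f \<le> eu q u f"
        using att_inf[OF Cc Cne] by blast
      have "eu pf u f \<le> eu p u f" using pf p by blast
      then have "\<not> (INF q\<in>C. eu q u f) > (INF q\<in>C. eu q u (\<lambda>_. x))"
        unfolding INF_const_act[OF CP Cne] using pf le by linarith
      then show ?thesis using hpc[OF hp f x] by blast
    next
      assume bw: "bewley_rep \<Sigma> X pr u C"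
      have "\<not> eu p u f > eu p u (\<lambda>_. x)" using ec[OF p] le by simp
      then show ?thesis using bwc[OF bw f x] p by blast
    qed
  }
  {
    fix f x p assume f: "f \<in> simple_acts \<Sigma> X" and x: "(\<lambda>_. x) \<in> simple_acts \<Sigma> X"
      and p: "p \<in> C" and le: "u x \<le> eu p u f"
    show "\<not> pr (\<lambda>_. x) f"
      using soc
    proof
      assume hp: "hp_rep \<Sigma> X pr u C C"
      obtain pf where pf: "pf \<in> C" "(SUP q\<in>C. eu q u f) = eu pf u f" "\<forall>q\<in>C. eu q u f \<le> eu pf u f"
        using att_sup[OF Cc Cne] by blast
      have "eu p u f \<le> eu pf u f" using pf p by blast
      then have "\<not> (SUP q\<in>C. eu q u (\<lambda>_. x)) > (SUP q\<in>C. eu q u f)"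
        unfolding INF_const_act[OF CP Cne] using pf le by linarith
      then show ?thesis using hpc[OF hp x f] by blast
    next
      assume bw: "bewley_rep \<Sigma> X pr u C"
      have "\<not> eu p u (\<lambda>_. x) > eu p u f" using ec[OF p] le by simp
      then show ?thesis using bwc[OF bw x f] p by blast
    qed
  }
qed


lemma fa_convex:
  assumes alg: "algebra UNIV \<Sigma>"
  shows "fconvex (fa_probs \<Sigma>)"
  unfolding fconvex_def
proof (intro ballI allI impI)
  fix p q and t :: real
  assume p: "p \<in> fa_probs \<Sigma>" and q: "q \<in> fa_probs \<Sigma>" and t: "0 \<le> t \<and> t \<le> 1"
  show "(\<lambda>A. t * p A + (1 - t) * q A) \<in> fa_probs \<Sigma>"
    unfolding fa_probs_def
  proof (intro CollectI conjI ballI allI impI)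
    fix A assume "A \<in> \<Sigma>"
    then have "0 \<le> p A" "0 \<le> q A" using p q unfolding fa_probs_def by auto
    then show "0 \<le> t * p A + (1 - t) * q A" using t by simp
  next
    show "t * p UNIV + (1 - t) * q UNIV = 1" using p q unfolding fa_probs_def by simp
  next
    fix A B assume "A \<in> \<Sigma>" "B \<in> \<Sigma>" "A \<inter> B = {}"
    then have "p (A \<union> B) = p A + p B" "q (A \<union> B) = q A + q B" using p q unfolding fa_probs_def by blast+
    then show "t * p (A \<union> B) + (1 - t) * q (A \<union> B) = t * p A + (1 - t) * q A + (t * p B + (1 - t) * q B)"
      by (simp add: algebra_simps)
  next
    fix A assume "A \<notin> \<Sigma>"
    then show "t * p A + (1 - t) * q A = 0" using p q unfolding fa_probs_def by simp
  qed
qed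


lemma sep_full:
  fixes u :: "'b::real_vector \<Rightarrow> real" and K :: "('a set \<Rightarrow> real) set"
  assumes alg: "algebra UNIV \<Sigma>" and convX: "convex X" and u_aff: "affine_on X u"
    and x1: "x1 \<in> X" and x2: "x2 \<in> X" and ux: "u x1 < u x2"
    and Kc: "compact K" and Kcv: "fconvex K" and KP: "K \<subseteq> fa_probs \<Sigma>"
    and p0: "p0 \<in> fa_probs \<Sigma>" and p0K: "p0 \<notin> K"
  shows "\<exists>f\<in>simple_acts \<Sigma> X. \<exists>x\<in>X. eu p0 u f = u x \<and> (\<forall>q\<in>K. eu q u f > u x)"
proof (cases "K = {}")
  case True
  have "eu p0 u (\<lambda>_. x1) = u x1" by (rule eu_const[OF p0])
  moreover have "(\<lambda>_. x1) \<in> simple_acts \<Sigma> X" by (rule const_act[OF alg x1])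
  ultimately show ?thesis using x1 True by blast
next
  case False
  obtain F w where Fw: "finite F" "F \<subseteq> \<Sigma>" "\<forall>q\<in>K. (\<Sum>A\<in>F. w A * q A) > (\<Sum>A\<in>F. w A * p0 A)"
    using sep_linear[OF alg Kc Kcv KP p0 p0K False] by blast
  obtain f x c where fx: "f \<in> simple_acts \<Sigma> X" "x \<in> X" "c > 0"
    "\<forall>q\<in>fa_probs \<Sigma>. eu q u f = u x + c * ((\<Sum>A\<in>F. w A * q A) - (\<Sum>A\<in>F. w A * p0 A))"
    using act_from_linear[OF alg convX u_aff x1 x2 ux Fw(1,2) p0, of w] by blast
  have "eu p0 u f = u x + c * ((\<Sum>A\<in>F. w A * p0 A) - (\<Sum>A\<in>F. w A * p0 A))" using fx(4) p0 by blast
  then have "eu p0 u f = u x" by simp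
  moreover have "eu q u f > u x" if q: "q \<in> K" for q
  proof -
    have "0 < (\<Sum>A\<in>F. w A * q A) - (\<Sum>A\<in>F. w A * p0 A)" using Fw(3) q by simp
    then have "0 < c * ((\<Sum>A\<in>F. w A * q A) - (\<Sum>A\<in>F. w A * p0 A))" using fx(3) by simp
    moreover have "q \<in> fa_probs \<Sigma>" using q KP by blast
    then have "eu q u f = u x + c * ((\<Sum>A\<in>F. w A * q A) - (\<Sum>A\<in>F. w A * p0 A))" using fx(4) by blast
    ultimately show ?thesis by linarith
  qed
  ultimately show ?thesis using fx by blast
qed



lemma gt_comb:
  fixes t a a' b b' :: real
  assumes "0 \<le> t" "t \<le> 1" "a' < a" "b' < b"
  shows "t * a' + (1 - t) * b' < t * a + (1 - t) * b"
proof (cases "t = 0")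
  case True then show ?thesis using assms by simp
next
  case False
  then have "t * a' < t * a" using assms by simp
  moreover have "(1 - t) * b' \<le> (1 - t) * b" using assms by (intro mult_left_mono) auto
  ultimately show ?thesis by linarith
qed

theorem proposition3:
  fixes \<Sigma> :: "'a set set" and X :: "'b::real_vector set" and u :: "'b \<Rightarrow> real"
    and n :: nat and pr :: "nat \<Rightarrow> ('a,'b) pref"
    and C :: "nat \<Rightarrow> ('a set \<Rightarrow> real) set"
  assumes alg: "algebra UNIV \<Sigma>"
    and convX: "convex X" and nonsingX: "\<exists>x\<in>X. \<exists>y\<in>X. x \<noteq> y"
    and u_aff: "affine_on X u" and u_nonconst: "\<exists>x\<in>X. \<exists>y\<in>X. u x \<noteq> u y"
    and indiv: "\<forall>i\<in>{1..n}. unique_bewley_rep \<Sigma> X (pr i) u (C i)"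
    and soc: "unique_hp_rep \<Sigma> X (pr 0) u (C 0) (C 0) \<or> unique_bewley_rep \<Sigma> X (pr 0) u (C 0)"
  shows "((\<forall>f\<in>simple_acts \<Sigma> X. \<forall>g\<in>simple_acts \<Sigma> X.
              (\<forall>i\<in>{1..n}. pr i f g) \<longrightarrow> pr 0 f g)
           \<longleftrightarrow> C 0 \<subseteq> fconvex_hull (\<Union>i\<in>{1..n}. C i))
       \<and> ((\<forall>f\<in>simple_acts \<Sigma> X. \<forall>x\<in>X.
              (\<exists>i\<in>{1..n}. incomp (pr i) f (\<lambda>_. x)) \<longrightarrow> incomp (pr 0) f (\<lambda>_. x))
           \<longleftrightarrow> fconvex_hull (\<Union>i\<in>{1..n}. C i) \<subseteq> C 0)
       \<and> ((\<forall>f\<in>simple_acts \<Sigma> X. \<forall>g\<in>simple_acts \<Sigma> X.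
              (\<forall>i\<in>{1..n}. pr i f g) \<longrightarrow> pr 0 f g)
          \<and> (\<forall>f\<in>simple_acts \<Sigma> X. \<forall>x\<in>X.
              (\<exists>i\<in>{1..n}. incomp (pr i) f (\<lambda>_. x)) \<longrightarrow> incomp (pr 0) f (\<lambda>_. x))
          \<longrightarrow> C 0 = fconvex_hull (\<Union>i\<in>{1..n}. C i))"
proof -
  define K where "K = fconvex_hull (\<Union>i\<in>{1..n}. C i)"
  define acts where "acts = simple_acts \<Sigma> X"
  obtain x1 x2 where x12: "x1 \<in> X" "x2 \<in> X" "u x1 < u x2"
  proof -
    obtain a b where ab: "a \<in> X" "b \<in> X" "u a \<noteq> u b" using u_nonconst by blast
    show ?thesis
    proof (cases "u a < u b")
      case True then show ?thesis using that ab by blast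
    next
      case False then have "u b < u a" using ab by linarith
      then show ?thesis using that ab by blast
    qed
  qed
  have soc': "hp_rep \<Sigma> X (pr 0) u (C 0) (C 0) \<or> bewley_rep \<Sigma> X (pr 0) u (C 0)"
    using soc unfolding unique_hp_rep_def unique_bewley_rep_def by blast
  have S1: "C 0 \<noteq> {} \<and> fconvex (C 0) \<and> compact (C 0) \<and> C 0 \<subseteq> fa_probs \<Sigma>"
    by (rule soc_props(1)[OF soc'])
  note S2 = soc_props(2)[OF soc']
  note S3 = soc_props(3)[OF soc']
  note S4 = soc_props(4)[OF soc']
  have bw: "bewley_rep \<Sigma> X (pr i) u (C i)" if "i \<in> {1..n}" for i
    using indiv that unfolding unique_bewley_rep_def by blast
  have Ci: "C i \<noteq> {} \<and> fconvex (C i) \<and> compact (C i) \<and> C i \<subseteq> fa_probs \<Sigma>" if "i \<in> {1..n}" for i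
    using bw[OF that] unfolding bewley_rep_def by blast
  have prc: "pr i f g \<longleftrightarrow> (\<forall>p\<in>C i. eu p u f > eu p u g)"
    if "i \<in> {1..n}" "f \<in> acts" "g \<in> acts" for i f g
    using bw[OF that(1)] that(2,3) unfolding bewley_rep_def acts_def by blast
  have cact: "(\<lambda>_. x) \<in> acts" if "x \<in> X" for x
    unfolding acts_def by (rule const_act[OF alg that])
  have ec: "eu p u (\<lambda>_. x) = u x" if "p \<in> fa_probs \<Sigma>" for p x
    using that by (rule eu_const)
  have CiK: "C i \<subseteq> K" if "i \<in> {1..n}" for i
    unfolding K_def using that hull_sub by blast
  have KP: "K \<subseteq> fa_probs \<Sigma>"
    unfolding K_def using Ci by (intro hull_min fa_convex[OF alg]) blast
  have Kc: "compact K"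
    unfolding K_def using Ci by (intro hull_union_compact[of n C n]) auto
  have Kcv: "fconvex K" unfolding K_def by (rule hull_convex)
  have part1: "(\<forall>f\<in>acts. \<forall>g\<in>acts. (\<forall>i\<in>{1..n}. pr i f g) \<longrightarrow> pr 0 f g) \<longleftrightarrow> C 0 \<subseteq> K"
  proof
    assume par: "\<forall>f\<in>acts. \<forall>g\<in>acts. (\<forall>i\<in>{1..n}. pr i f g) \<longrightarrow> pr 0 f g"
    show "C 0 \<subseteq> K"
    proof (rule ccontr)
      assume "\<not> C 0 \<subseteq> K"
      then obtain p0 where p0: "p0 \<in> C 0" "p0 \<notin> K" by blast
      have p0P: "p0 \<in> fa_probs \<Sigma>" using p0 S1 by blast
      obtain f x where fx: "f \<in> acts" "x \<in> X" "eu p0 u f = u x" "\<forall>q\<in>K. eu q u f > u x"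
        using sep_full[OF alg convX u_aff x12 Kc Kcv KP p0P p0(2)] unfolding acts_def by blast
      have "pr i f (\<lambda>_. x)" if i: "i \<in> {1..n}" for i
      proof -
        have "\<forall>p\<in>C i. eu p u f > eu p u (\<lambda>_. x)"
        proof
          fix p assume p: "p \<in> C i"
          then have "p \<in> K" "p \<in> fa_probs \<Sigma>" using CiK[OF i] Ci[OF i] by blast+
          then show "eu p u f > eu p u (\<lambda>_. x)" using fx(4) ec by simp
        qed
        then show ?thesis using prc[OF i fx(1) cact[OF fx(2)]] by blast
      qed
      then have "pr 0 f (\<lambda>_. x)" using par fx(1) cact[OF fx(2)] by blast
      moreover have "\<not> pr 0 f (\<lambda>_. x)"
        using S3[of f x p0] fx p0 cact[OF fx(2)] unfolding acts_def by simp
      ultimately show False by blast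
    qed
  next
    assume sub: "C 0 \<subseteq> K"
    show "\<forall>f\<in>acts. \<forall>g\<in>acts. (\<forall>i\<in>{1..n}. pr i f g) \<longrightarrow> pr 0 f g"
    proof (intro ballI impI)
      fix f g assume f: "f \<in> acts" and g: "g \<in> acts" and all: "\<forall>i\<in>{1..n}. pr i f g"
      define P where "P = {p. eu p u f > eu p u g}"
      have "fconvex P" unfolding fconvex_def P_def
        by (auto simp: eu_lin intro!: gt_comb)
      moreover have "(\<Union>i\<in>{1..n}. C i) \<subseteq> P"
        using all prc f g unfolding P_def by blast
      ultimately have "K \<subseteq> P" unfolding K_def by (rule hull_min[rotated])
      then have "\<forall>p\<in>C 0. eu p u f > eu p u g" using sub unfolding P_def by blast
      then show "pr 0 f g" using S2 f g unfolding acts_def by blast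
    qed
  qed
  have incomp_i: "(\<exists>p\<in>C i. eu p u f \<le> u x) \<and> (\<exists>p\<in>C i. u x \<le> eu p u f)"
    if i: "i \<in> {1..n}" and f: "f \<in> acts" and x: "x \<in> X" and inc: "incomp (pr i) f (\<lambda>_. x)" for i f x
  proof -
    have CP: "C i \<subseteq> fa_probs \<Sigma>" using Ci[OF i] by blast
    have "\<not> (\<forall>p\<in>C i. eu p u f > eu p u (\<lambda>_. x))"
      using inc prc[OF i f cact[OF x]] unfolding incomp_def by blast
    then obtain p where "p \<in> C i" "\<not> eu p u f > u x" using ec CP by auto
    moreover have "\<not> (\<forall>p\<in>C i. eu p u (\<lambda>_. x) > eu p u f)"
      using inc prc[OF i cact[OF x] f] unfolding incomp_def by blast
    then obtain p' where "p' \<in> C i" "\<not> u x > eu p' u f" using ec CP by auto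
    ultimately show ?thesis by (meson not_less)
  qed
  have part2: "(\<forall>f\<in>acts. \<forall>x\<in>X. (\<exists>i\<in>{1..n}. incomp (pr i) f (\<lambda>_. x)) \<longrightarrow> incomp (pr 0) f (\<lambda>_. x))
       \<longleftrightarrow> K \<subseteq> C 0"
  proof
    assume cau: "\<forall>f\<in>acts. \<forall>x\<in>X. (\<exists>i\<in>{1..n}. incomp (pr i) f (\<lambda>_. x)) \<longrightarrow> incomp (pr 0) f (\<lambda>_. x)"
    have "(\<Union>i\<in>{1..n}. C i) \<subseteq> C 0"
    proof (rule ccontr)
      assume "\<not> (\<Union>i\<in>{1..n}. C i) \<subseteq> C 0"
      then obtain i p where i: "i \<in> {1..n}" and p: "p \<in> C i" "p \<notin> C 0" by blast
      have pP: "p \<in> fa_probs \<Sigma>" using p Ci[OF i] by blast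
      have C0: "compact (C 0)" "fconvex (C 0)" "C 0 \<subseteq> fa_probs \<Sigma>" using S1 by auto
      obtain f x where fx: "f \<in> acts" "x \<in> X" "eu p u f = u x" "\<forall>q\<in>C 0. eu q u f > u x"
        using sep_full[OF alg convX u_aff x12 C0 pP p(2)] unfolding acts_def by blast
      have "\<not> pr i f (\<lambda>_. x)"
        using prc[OF i fx(1) cact[OF fx(2)]] p fx(3) ec[OF pP] by force
      moreover have "\<not> pr i (\<lambda>_. x) f"
        using prc[OF i cact[OF fx(2)] fx(1)] p fx(3) ec[OF pP] by force
      ultimately have "incomp (pr i) f (\<lambda>_. x)" unfolding incomp_def by blast
      then have "incomp (pr 0) f (\<lambda>_. x)" using cau fx(1,2) i by blast
      then have np: "\<not> pr 0 f (\<lambda>_. x)" unfolding incomp_def by blast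
      have "\<forall>q\<in>C 0. eu q u f > eu q u (\<lambda>_. x)"
      proof
        fix q assume q: "q \<in> C 0"
        then have "q \<in> fa_probs \<Sigma>" using C0 by blast
        then show "eu q u f > eu q u (\<lambda>_. x)" using fx(4) q ec by simp
      qed
      then have "pr 0 f (\<lambda>_. x)" using S2 fx(1) cact[OF fx(2)] unfolding acts_def by blast
      then show False using np by blast
    qed
    then show "K \<subseteq> C 0" unfolding K_def using S1 by (intro hull_min) auto
  next
    assume sub: "K \<subseteq> C 0"
    show "\<forall>f\<in>acts. \<forall>x\<in>X. (\<exists>i\<in>{1..n}. incomp (pr i) f (\<lambda>_. x)) \<longrightarrow> incomp (pr 0) f (\<lambda>_. x)"
    proof (intro ballI impI)
      fix f x assume f: "f \<in> acts" and x: "x \<in> X" and ex: "\<exists>i\<in>{1..n}. incomp (pr i) f (\<lambda>_. x)"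
      then obtain i where i: "i \<in> {1..n}" and inc: "incomp (pr i) f (\<lambda>_. x)" by blast
      obtain p p' where pp: "p \<in> C i" "eu p u f \<le> u x" "p' \<in> C i" "u x \<le> eu p' u f"
        using incomp_i[OF i f x inc] by blast
      have "p \<in> C 0" "p' \<in> C 0" using pp CiK[OF i] sub by blast+
      then have "\<not> pr 0 f (\<lambda>_. x)" "\<not> pr 0 (\<lambda>_. x) f"
        using S3[of f x p] S4[of f x p'] pp f cact[OF x] unfolding acts_def by blast+
      then show "incomp (pr 0) f (\<lambda>_. x)" unfolding incomp_def by blast
    qed
  qed
  show ?thesis
    using part1 part2 unfolding K_def acts_def by blast
qed


end
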